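(* Let $K=\mathsf{SU}(3)$, let $\Delta=\mathrm{Tr}(K)\subseteq\mathbb{C}$, and let $N\subseteq K$ be the set of generic elements. Then $\mathrm{Tr}(N)$ is conull in $\Delta$ (its complement in $\Delta$ has Lebesgue measure zero).
   Context: An element $a\in K$ is generic if it is regular (its centralizer $K_a=\{g\in K:gag^{-1}=a\}$ is a maximal torus) and the cyclic group $\langle a\rangle$ is dense in $K_a$. *)

theory Defs
  imports "HOL-Analysis.Analysis"
begin

type_synonym cmat3 = "complex^3^3"

text \<open>Conjugate transpose; for unitary matrices this is the group inverse.\<close>
definition ctrans :: "cmat3 \<Rightarrow> cmat3" where
  "ctrans A = (\<chi> i j. cnj (A $ j $ i))"

definition SU3 :: "cmat3 set" where
  "SU3 = {A. ctrans A ** A = mat 1 \<and> A ** ctrans A = mat 1 \<and> det A = 1}"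

definition centralizer :: "cmat3 \<Rightarrow> cmat3 set" where
  "centralizer a = {g \<in> SU3. g ** a ** ctrans g = a}"

text \<open>A torus of K: a compact connected abelian subgroup of K
  (closed subgroups of Lie groups are Lie groups; compact connected abelian
  Lie groups are tori).\<close>
definition is_torus :: "cmat3 set \<Rightarrow> bool" where
  "is_torus T \<longleftrightarrow> T \<subseteq> SU3 \<and> mat 1 \<in> T \<and>
     (\<forall>x\<in>T. \<forall>y\<in>T. x ** y \<in> T) \<and> (\<forall>x\<in>T. ctrans x \<in> T) \<and>
     (\<forall>x\<in>T. \<forall>y\<in>T. x ** y = y ** x) \<and> compact T \<and> connected T"

definition is_maximal_torus :: "cmat3 set \<Rightarrow> bool" where
  "is_maximal_torus T \<longleftrightarrow> is_torus T \<and> (\<forall>S. is_torus S \<and> T \<subseteq> S \<longrightarrow> S = T)"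

definition mpow :: "cmat3 \<Rightarrow> nat \<Rightarrow> cmat3" where
  "mpow a n = ((\<lambda>x. a ** x) ^^ n) (mat 1)"

definition cyclic_gen :: "cmat3 \<Rightarrow> cmat3 set" where
  "cyclic_gen a = range (mpow a) \<union> range (mpow (ctrans a))"

definition regular :: "cmat3 \<Rightarrow> bool" where
  "regular a \<longleftrightarrow> is_maximal_torus (centralizer a)"

definition generic :: "cmat3 \<Rightarrow> bool" where
  "generic a \<longleftrightarrow> a \<in> SU3 \<and> regular a \<and> centralizer a \<subseteq> closure (cyclic_gen a)"

end

theory Submission
  imports Defs "HOL-Computational_Algebra.Fundamental_Theorem_Algebra"
begin

lemma charpoly3:
  fixes A :: cmat3
  shows "det (mat z - A) = z^3 - trace A * z^2 +
     (A$1$1*A$2$2 - A$1$2*A$2$1 + A$1$1*A$3$3 - A$1$3*A$3$1 + A$2$2*A$3$3 - A$2$3*A$3$2) * z - det A"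
  by (simp add: det_3 trace_def sum_3 mat_def algebra_simps power2_eq_square power3_eq_cube)

lemma cubic_roots:
  fixes t c d :: complex
  shows "\<exists>l1 l2 l3. (\<forall>z. z^3 - t*z^2 + c*z - d = (z-l1)*(z-l2)*(z-l3)) \<and> t = l1+l2+l3 \<and> d = l1*l2*l3"
proof -
  have "\<exists>z. poly (pCons (-d) [:c, -t, 1:]) z = 0"
    by (rule fundamental_theorem_of_algebra_alt) auto
  then obtain l1 where r1: "-d + l1*(c + l1*(-t + l1)) = 0" by (auto simp: algebra_simps)
  define b where "b = l1 - t"
  define e where "e = c + l1 * b"
  define s where "s = csqrt (b^2 - 4*e)"
  define l2 where "l2 = (-b + s)/2"
  define l3 where "l3 = (-b - s)/2"
  have s2: "s^2 = b^2 - 4*e" unfolding s_def by simp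
  have sum23: "l2 + l3 = -b" unfolding l2_def l3_def by (simp add: field_simps)
  have prod23: "l2 * l3 = e" unfolding l2_def l3_def
    using s2 by (simp add: field_simps power2_eq_square)
  have d: "d = l1 * e" using r1 unfolding e_def b_def by (simp add: algebra_simps)
  have "\<forall>z. z^3 - t*z^2 + c*z - d = (z-l1)*(z-l2)*(z-l3)"
  proof
    fix z
    have "(z-l1)*(z-l2)*(z-l3) = (z-l1)*(z^2 - (l2+l3)*z + l2*l3)"
      by (simp add: algebra_simps power2_eq_square)
    also have "\<dots> = z^3 - t*z^2 + c*z - d"
      unfolding sum23 prod23 d by (simp add: e_def b_def algebra_simps power2_eq_square power3_eq_cube)
    finally show "z^3 - t*z^2 + c*z - d = (z-l1)*(z-l2)*(z-l3)" by simp
  qed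
  moreover have "t = l1+l2+l3" using sum23 b_def by (simp add: algebra_simps)
  moreover have "d = l1*l2*l3" using d prod23 by (simp add: algebra_simps)
  ultimately show ?thesis by blast
qed

definition cinner :: "complex^3 \<Rightarrow> complex^3 \<Rightarrow> complex" where
  "cinner u w = (\<Sum>i\<in>UNIV. cnj (u$i) * w$i)"

lemma cinner_adj: "cinner (A *v u) w = cinner u (ctrans A *v w)"
  by (simp add: cinner_def matrix_vector_mult_def ctrans_def sum_3 algebra_simps)

lemma cinner_self_nz: "v \<noteq> 0 \<Longrightarrow> cinner v v \<noteq> 0"
proof -
  assume "v \<noteq> 0"
  have cn: "cnj a * a = complex_of_real ((cmod a)^2)" for a
    by (metis complex_norm_square mult.commute)
  have eq: "cinner v v = of_real ((cmod (v$1))^2 + (cmod (v$2))^2 + (cmod (v$3))^2)"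
    unfolding cinner_def sum_3 cn of_real_add ..
  have "\<exists>i. v$i \<noteq> 0" using \<open>v \<noteq> 0\<close> by (metis vec_eq_iff zero_index)
  then obtain i where "v$i \<noteq> 0" by blast
  then have "(cmod (v$1))^2 + (cmod (v$2))^2 + (cmod (v$3))^2 > 0"
    using exhaust_3[of i] by (auto simp: add_pos_nonneg add_nonneg_pos)
  then show ?thesis unfolding eq by (metis of_real_eq_0_iff order_less_irrefl)
qed

lemma eig_unit:
  assumes A: "A \<in> SU3" and l: "det (mat l - A) = 0"
  shows "cmod l = 1"
proof -
  have "\<not> invertible (mat l - A)" using l invertible_det_nz by blast
  then have "\<not> (\<exists>B. B ** (mat l - A) = mat 1)" unfolding invertible_left_inverse by blast
  then obtain v where v0: "v \<noteq> 0" and v: "(mat l - A) *v v = 0"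
    unfolding matrix_left_invertible_ker by blast
  have ml: "mat l *v v = l *s v"
    by (simp add: vec_eq_iff matrix_vector_mult_def mat_def sum_3 forall_3)
  have Av: "A *v v = l *s v" using v
    by (simp add: matrix_vector_mult_diff_rdistrib ml)
  have "cinner (A *v v) (A *v v) = cinner v ((ctrans A ** A) *v v)"
    by (simp add: cinner_adj matrix_vector_mul_assoc)
  also have "\<dots> = cinner v v" using A by (simp add: SU3_def)
  finally have "cnj l * l * cinner v v = cinner v v"
    unfolding Av by (simp add: cinner_def sum_3 algebra_simps)
  then have "cnj l * l = 1" using cinner_self_nz[OF v0] by simp
  then have "(cmod l)^2 = 1" by (metis complex_norm_square mult.commute of_real_eq_1_iff)
  then show ?thesis using norm_ge_zero[of l] by (auto simp: power2_eq_1_iff)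
qed

definition ftr :: "real \<Rightarrow> real \<Rightarrow> complex" where
  "ftr x y = exp (\<i> * of_real x) + exp (\<i> * of_real y) + exp (- (\<i> * of_real (x + y)))"

lemma trace_SU3:
  assumes A: "A \<in> SU3"
  shows "\<exists>x y. trace A = ftr x y"
proof -
  obtain l1 l2 l3 where P: "\<forall>z. det (mat z - A) = (z-l1)*(z-l2)*(z-l3)"
     and t: "trace A = l1+l2+l3" and d: "det A = l1*l2*l3"
    using cubic_roots[of "trace A" _ "det A"] charpoly3[of _ A] by metis
  have u1: "cmod l1 = 1" using eig_unit[OF A] P by simp
  have u2: "cmod l2 = 1" using eig_unit[OF A] P by simp
  have p: "l1*l2*l3 = 1" using d A by (simp add: SU3_def)
  have e1: "exp (\<i> * of_real (Arg l1)) = l1" proof -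
    have "l1 \<noteq> 0" using u1 by auto
    from Arg_eq[OF this] u1 show ?thesis by simp
  qed
  have e2: "exp (\<i> * of_real (Arg l2)) = l2" proof -
    have "l2 \<noteq> 0" using u2 by auto
    from Arg_eq[OF this] u2 show ?thesis by simp
  qed
  have e3: "exp (- (\<i> * of_real (Arg l1 + Arg l2))) = l3"
  proof -
    have "exp (- (\<i> * of_real (Arg l1 + Arg l2))) = inverse (l1 * l2)"
      by (metis exp_add exp_minus distrib_left of_real_add e1 e2)
    also have "\<dots> = l3"
    proof -
      have "l1 \<noteq> 0" "l2 \<noteq> 0" using u1 u2 by auto
      then show ?thesis using p by (simp add: field_simps)
    qed
    finally show ?thesis .
  qed
  have "trace A = ftr (Arg l1) (Arg l2)" unfolding ftr_def t e1 e2 e3 ..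
  then show ?thesis by blast
qed

definition ev :: "real \<Rightarrow> real \<Rightarrow> 3 \<Rightarrow> complex" where
  "ev x y i = (if i = 1 then exp (\<i> * of_real x) else if i = 2 then exp (\<i> * of_real y)
      else exp (- (\<i> * of_real (x + y))))"

lemma ev_simps [simp]: "ev x y 1 = exp (\<i> * of_real x)" "ev x y 2 = exp (\<i> * of_real y)"
   "ev x y 3 = exp (- (\<i> * of_real (x + y)))"
  by (simp_all add: ev_def)

definition Dg :: "real \<Rightarrow> real \<Rightarrow> cmat3" where
  "Dg x y = (\<chi> i j. if i = j then ev x y i else 0)"

lemma Dg_idx [simp]: "Dg x y $ i $ j = (if i = j then ev x y i else 0)"
  by (simp add: Dg_def)

lemma trace_Dg: "trace (Dg x y) = ftr x y"
  by (simp add: trace_def sum_3 ftr_def)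

lemma Dg_mult: "Dg a b ** Dg c d = Dg (a + c) (b + d)"
  by (simp add: vec_eq_iff forall_3 matrix_matrix_mult_def sum_3 algebra_simps exp_add[symmetric])

lemma ctrans_Dg: "ctrans (Dg a b) = Dg (-a) (-b)"
  by (simp add: vec_eq_iff forall_3 ctrans_def exp_cnj algebra_simps)

lemma Dg_0: "Dg 0 0 = mat 1"
  by (simp add: vec_eq_iff forall_3 mat_def)

lemma det_Dg: "det (Dg a b) = 1"
  by (simp add: det_3 exp_add[symmetric] algebra_simps)

lemma Dg_SU3: "Dg a b \<in> SU3"
  unfolding SU3_def by (simp add: ctrans_Dg Dg_mult Dg_0 det_Dg)

lemma ctrans_mult: "ctrans (A ** B) = ctrans B ** ctrans A"
  by (simp add: vec_eq_iff ctrans_def matrix_matrix_mult_def sum_3 algebra_simps)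

lemma ctrans_ctrans [simp]: "ctrans (ctrans A) = A"
  by (simp add: vec_eq_iff ctrans_def)

lemma ctrans_1 [simp]: "ctrans (mat 1) = mat 1"
  by (simp add: vec_eq_iff ctrans_def mat_def forall_3)

lemma SU3_mult: "A \<in> SU3 \<Longrightarrow> B \<in> SU3 \<Longrightarrow> A ** B \<in> SU3"
proof -
  assume A: "A \<in> SU3" and B: "B \<in> SU3"
  have "ctrans (A ** B) ** (A ** B) = ctrans B ** (ctrans A ** A) ** B"
    by (simp add: ctrans_mult matrix_mul_assoc)
  also have "\<dots> = mat 1" using A B by (simp add: SU3_def)
  finally have 1: "ctrans (A ** B) ** (A ** B) = mat 1" .
  have "(A ** B) ** ctrans (A ** B) = A ** (B ** ctrans B) ** ctrans A"
    by (simp add: ctrans_mult matrix_mul_assoc)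
  also have "\<dots> = mat 1" using A B by (simp add: SU3_def)
  finally have 2: "(A ** B) ** ctrans (A ** B) = mat 1" .
  show ?thesis using 1 2 A B by (simp add: SU3_def det_mul)
qed

lemma SU3_ctrans: "A \<in> SU3 \<Longrightarrow> ctrans A \<in> SU3"
proof -
  assume A: "A \<in> SU3"
  have "det (ctrans A ** A) = 1" using A by (simp add: SU3_def)
  then have "det (ctrans A) = 1" using A by (simp add: SU3_def det_mul)
  then show ?thesis using A by (simp add: SU3_def)
qed

lemma SU3_1: "mat 1 \<in> SU3"
  by (simp add: SU3_def)

definition goodp :: "real \<Rightarrow> real \<Rightarrow> bool" where
  "goodp x y \<longleftrightarrow> (\<forall>(a::int) (b::int) (c::int). of_int a * x + of_int b * y = 2 * pi * of_int c \<longrightarrow> a = 0 \<and> b = 0)"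

lemma exp_ix_eq: "exp (\<i> * of_real u) = exp (\<i> * of_real v) \<Longrightarrow> \<exists>n::int. u - v = 2 * pi * n"
proof -
  assume "exp (\<i> * of_real u) = exp (\<i> * of_real v)"
  then obtain n :: int where "\<i> * of_real u = \<i> * of_real v + (of_int (2 * n) * pi) * \<i>"
    unfolding exp_eq by blast
  then have "\<i> * complex_of_real u = \<i> * of_real (v + 2 * pi * n)" by (simp add: algebra_simps)
  then have "complex_of_real u = of_real (v + 2 * pi * n)" by simp
  then have "u = v + 2 * pi * n" using of_real_eq_iff by blast
  then show ?thesis by auto
qed

lemma ev_distinct:
  assumes g: "goodp x y" and ij: "i \<noteq> j"
  shows "ev x y i \<noteq> ev x y j"
proof -
  have 12: "exp (\<i> * of_real x) \<noteq> exp (\<i> * of_real y)"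
  proof
    assume "exp (\<i> * of_real x) = exp (\<i> * of_real y)"
    then obtain n::int where "x - y = 2*pi*n" using exp_ix_eq by blast
    then have "1 * x + (-1) * y = 2*pi*n" by simp
    then show False using g unfolding goodp_def by (metis one_neq_zero of_int_1 of_int_minus)
  qed
  have 13: "exp (\<i> * of_real x) \<noteq> exp (- (\<i> * of_real (x + y)))"
  proof
    assume "exp (\<i> * of_real x) = exp (- (\<i> * of_real (x + y)))"
    then have "exp (\<i> * of_real x) = exp (\<i> * of_real (- (x + y)))" by (simp only: of_real_minus mult_minus_right)
    then obtain n::int where "x - (-(x + y)) = 2*pi*n" using exp_ix_eq by blast
    then have "of_int 2 * x + of_int 1 * y = 2*pi*n" by simp
    then show False using g unfolding goodp_def by (metis one_neq_zero)
  qed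
  have 23: "exp (\<i> * of_real y) \<noteq> exp (- (\<i> * of_real (x + y)))"
  proof
    assume "exp (\<i> * of_real y) = exp (- (\<i> * of_real (x + y)))"
    then have "exp (\<i> * of_real y) = exp (\<i> * of_real (- (x + y)))" by (simp only: of_real_minus mult_minus_right)
    then obtain n::int where "y - (-(x + y)) = 2*pi*n" using exp_ix_eq by blast
    then have "of_int 1 * x + of_int 2 * y = 2*pi*n" by simp
    then show False using g unfolding goodp_def by (metis one_neq_zero)
  qed
  show ?thesis using ij 12 13 23 exhaust_3[of i] exhaust_3[of j] by auto
qed

definition Tor :: "cmat3 set" where
  "Tor = {g \<in> SU3. \<forall>i j. i \<noteq> j \<longrightarrow> g$i$j = 0}"

lemma mult_Dg_right: fixes g :: cmat3 shows "(g ** Dg x y)$i$j = g$i$j * ev x y j"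
  using exhaust_3[of j] by (auto simp: matrix_matrix_mult_def sum_3)

lemma mult_Dg_left: fixes g :: cmat3 shows "(Dg x y ** g)$i$j = ev x y i * g$i$j"
  using exhaust_3[of i] by (auto simp: matrix_matrix_mult_def sum_3)

lemma diag_mult:
  fixes A B :: cmat3
  assumes "\<forall>i j. i \<noteq> j \<longrightarrow> A$i$j = 0" "\<forall>i j. i \<noteq> j \<longrightarrow> B$i$j = 0"
  shows "(A ** B)$i$j = (if i = j then A$i$i * B$i$i else 0)"
  using assms exhaust_3[of i] exhaust_3[of j] by (auto simp: matrix_matrix_mult_def sum_3)

lemma diag_comm:
  fixes A B :: cmat3
  assumes "\<forall>i j. i \<noteq> j \<longrightarrow> A$i$j = 0" "\<forall>i j. i \<noteq> j \<longrightarrow> B$i$j = 0"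
  shows "A ** B = B ** A"
  using diag_mult[OF assms] diag_mult[OF assms(2,1)] by (auto simp add: vec_eq_iff intro: mult.commute)

lemma comm_Dg_diag:
  assumes g: "goodp x y" and c: "g ** Dg x y = Dg x y ** g" and ij: "i \<noteq> j"
  shows "g$i$j = 0"
proof -
  have "(g ** Dg x y)$i$j = (Dg x y ** g)$i$j" using c by simp
  then have "g$i$j * ev x y j = ev x y i * g$i$j"
    by (simp only: mult_Dg_right mult_Dg_left)
  then have "g$i$j * (ev x y j - ev x y i) = 0" by (simp add: algebra_simps)
  then show ?thesis using ev_distinct[OF g ij] by simp
qed

lemma Dg_Tor: "Dg a b \<in> Tor"
  by (simp add: Tor_def Dg_SU3)

lemma Tor_comm_Dg: "g \<in> Tor \<Longrightarrow> g ** Dg x y = Dg x y ** g"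
  unfolding Tor_def by (auto intro: diag_comm)

lemma comm_conj:
  assumes "g \<in> SU3"
  shows "g ** D ** ctrans g = D \<longleftrightarrow> g ** D = D ** g"
proof
  assume h: "g ** D ** ctrans g = D"
  have "g ** D = g ** D ** (ctrans g ** g)" using assms by (simp add: SU3_def)
  also have "\<dots> = (g ** D ** ctrans g) ** g" by (simp add: matrix_mul_assoc)
  also have "\<dots> = D ** g" using h by simp
  finally show "g ** D = D ** g" .
next
  assume h: "g ** D = D ** g"
  have "g ** D ** ctrans g = D ** (g ** ctrans g)" using h by (simp add: matrix_mul_assoc)
  also have "\<dots> = D" using assms by (simp add: SU3_def)
  finally show "g ** D ** ctrans g = D" .
qed

lemma centralizer_Dg:
  assumes g: "goodp x y"
  shows "centralizer (Dg x y) = Tor"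
proof
  show "centralizer (Dg x y) \<subseteq> Tor"
    unfolding centralizer_def Tor_def using comm_conj comm_Dg_diag[OF g] by blast
  show "Tor \<subseteq> centralizer (Dg x y)"
  proof
    fix g assume g: "g \<in> Tor"
    then have "g \<in> SU3" by (simp add: Tor_def)
    then show "g \<in> centralizer (Dg x y)"
      unfolding centralizer_def using comm_conj Tor_comm_Dg[OF g] by blast
  qed
qed

lemma unit_exp_Arg: "cmod z = 1 \<Longrightarrow> exp (\<i> * of_real (Arg z)) = z"
proof -
  assume u: "cmod z = 1"
  then have "z \<noteq> 0" by auto
  from Arg_eq[OF this] u show ?thesis by simp
qed

lemma cnj_unit: "cnj z * z = 1 \<Longrightarrow> cmod z = 1"
proof -
  assume "cnj z * z = 1"
  then have "(cmod z)^2 = 1" by (metis complex_norm_square mult.commute of_real_eq_1_iff)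
  then show ?thesis using norm_ge_zero[of z] by (auto simp: power2_eq_1_iff)
qed

lemma Tor_Dg:
  assumes "g \<in> Tor"
  shows "g = Dg (Arg (g$1$1)) (Arg (g$2$2))"
proof -
  have d: "\<forall>i j. i \<noteq> j \<longrightarrow> g$i$j = 0" and S: "g \<in> SU3" using assms by (auto simp: Tor_def)
  have dc: "\<forall>i j. i \<noteq> j \<longrightarrow> ctrans g$i$j = 0" using d by (simp add: ctrans_def)
  have "(ctrans g ** g)$i$i = 1" for i using S by (simp add: SU3_def mat_def)
  then have "cnj (g$i$i) * g$i$i = 1" for i using diag_mult[OF dc d, of i i] by (simp add: ctrans_def)
  then have u: "cmod (g$i$i) = 1" for i by (rule cnj_unit)
  have det: "g$1$1 * g$2$2 * g$3$3 = 1" using S d by (simp add: SU3_def det_3)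
  have e1: "exp (\<i> * of_real (Arg (g$1$1))) = g$1$1" using u unit_exp_Arg by blast
  have e2: "exp (\<i> * of_real (Arg (g$2$2))) = g$2$2" using u unit_exp_Arg by blast
  have n: "g$1$1 \<noteq> 0" "g$2$2 \<noteq> 0" using u[of 1] u[of 2] by auto
  have e3: "exp (- (\<i> * of_real (Arg (g$1$1) + Arg (g$2$2)))) = g$3$3"
  proof -
    have "exp (- (\<i> * of_real (Arg (g$1$1) + Arg (g$2$2)))) = inverse (g$1$1 * g$2$2)"
      by (metis exp_add exp_minus distrib_left of_real_add e1 e2)
    also have "\<dots> = g$3$3" using det n by (simp add: field_simps)
    finally show ?thesis .
  qed
  show ?thesis
    using d e1 e2 e3 by (simp add: vec_eq_iff forall_3)
qed

definition Phi :: "real \<times> real \<Rightarrow> cmat3" where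
  "Phi p = Dg (fst p) (snd p)"

lemma Phi_cont: "continuous_on UNIV Phi"
proof -
  have ev: "continuous_on UNIV (\<lambda>p. ev (fst p) (snd p) i)" for i
    using exhaust_3[of i] by (auto intro!: continuous_intros)
  show ?thesis unfolding Phi_def Dg_def
  proof (intro continuous_on_vec_lambda)
    fix i j
    show "continuous_on UNIV (\<lambda>p. if i = j then ev (fst p) (snd p) i else 0)"
      by (cases "i = j") (simp_all add: ev)
  qed
qed

lemma Tor_image: "Tor = Phi ` ({-pi..pi} \<times> {-pi..pi})"
proof
  show "Tor \<subseteq> Phi ` ({-pi..pi} \<times> {-pi..pi})"
  proof
    fix g assume g: "g \<in> Tor"
    have "g = Phi (Arg (g$1$1), Arg (g$2$2))" using Tor_Dg[OF g] by (simp add: Phi_def)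
    moreover have "(Arg (g$1$1), Arg (g$2$2)) \<in> {-pi..pi} \<times> {-pi..pi}"
      using Arg_bounded[of "g$1$1"] Arg_bounded[of "g$2$2"] by auto
    ultimately show "g \<in> Phi ` ({-pi..pi} \<times> {-pi..pi})" by blast
  qed
  show "Phi ` ({-pi..pi} \<times> {-pi..pi}) \<subseteq> Tor" by (auto simp: Phi_def Dg_Tor)
qed

lemma Tor_range: "Tor = range Phi"
  using Tor_image by (auto simp: Phi_def Dg_Tor)

lemma Tor_torus: "is_torus Tor"
  unfolding is_torus_def
proof (intro conjI ballI)
  show "Tor \<subseteq> SU3" by (auto simp: Tor_def)
  have "\<forall>i j. i \<noteq> j \<longrightarrow> (mat 1::cmat3)$i$j = 0" by (simp add: mat_def)
  with SU3_1 show "mat 1 \<in> Tor" by (simp add: Tor_def)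
  fix x assume x: "x \<in> Tor"
  show "ctrans x \<in> Tor" using x SU3_ctrans[of x] unfolding Tor_def by (auto simp: ctrans_def)
  fix y assume y: "y \<in> Tor"
  show "x ** y \<in> Tor" using x y by (auto simp: Tor_def SU3_mult diag_mult)
  show "x ** y = y ** x" using x y by (auto simp: Tor_def intro: diag_comm)
next
  show "compact Tor" unfolding Tor_image
    by (rule compact_continuous_image) (auto intro: continuous_on_subset[OF Phi_cont] compact_Times)
  show "connected Tor" unfolding Tor_range
    by (rule connected_continuous_image[OF Phi_cont connected_UNIV])
qed

lemma Tor_maximal:
  assumes g: "goodp x y"
  shows "is_maximal_torus Tor"
  unfolding is_maximal_torus_def
proof (intro conjI allI impI Tor_torus)
  fix S assume S: "is_torus S \<and> Tor \<subseteq> S"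
  have "S \<subseteq> Tor"
  proof
    fix s assume s: "s \<in> S"
    have D: "Dg x y \<in> S" using S Dg_Tor by blast
    have "s ** Dg x y = Dg x y ** s" using S s D by (auto simp: is_torus_def)
    moreover have "s \<in> SU3" using S s by (auto simp: is_torus_def)
    ultimately have "s \<in> centralizer (Dg x y)" using comm_conj[of s "Dg x y"] by (auto simp: centralizer_def)
    then show "s \<in> Tor" using centralizer_Dg[OF g] by simp
  qed
  then show "S = Tor" using S by blast
qed

lemma mpow_Dg: "mpow (Dg x y) n = Dg (real n * x) (real n * y)"
proof (induction n)
  case 0
  then show ?case by (simp add: mpow_def Dg_0)
next
  case (Suc n)
  have "mpow (Dg x y) (Suc n) = Dg x y ** mpow (Dg x y) n" by (simp add: mpow_def)
  also have "\<dots> = Dg (real (Suc n) * x) (real (Suc n) * y)"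
    unfolding Suc Dg_mult by (simp add: algebra_simps)
  finally show ?case .
qed

lemma int_pow_in: "Dg (of_int k * x) (of_int k * y) \<in> cyclic_gen (Dg x y)"
proof (cases "k \<ge> 0")
  case True
  obtain n where "k = int n" using True by (intro that[of "nat k"]) simp
  then have "Dg (of_int k * x) (of_int k * y) = mpow (Dg x y) n" by (simp add: mpow_Dg)
  then show ?thesis unfolding cyclic_gen_def by blast
next
  case False
  obtain n where "k = - int n" using False by (intro that[of "nat (- k)"]) simp
  then have e: "of_int k * x = real n * - x" "of_int k * y = real n * - y" by simp_all
  have "mpow (ctrans (Dg x y)) n = Dg (real n * - x) (real n * - y)" by (simp only: ctrans_Dg mpow_Dg)
  then have "Dg (of_int k * x) (of_int k * y) = mpow (ctrans (Dg x y)) n" by (simp only: e)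
  then show ?thesis unfolding cyclic_gen_def by blast
qed

lemma exp_per: "exp (\<i> * complex_of_real (a + 2 * pi * of_int m)) = exp (\<i> * of_real a)"
proof -
  have "\<i> * complex_of_real (a + 2 * pi * of_int m) = \<i> * of_real a + \<i> * (of_int m * (of_real pi * 2))"
    by (simp add: algebra_simps)
  then show ?thesis by (simp only: exp_plus_2pin)
qed

lemma exp_per3: "exp (- (\<i> * complex_of_real (a + 2 * pi * of_int m + (b + 2 * pi * of_int m'))))
   = exp (- (\<i> * of_real (a + b)))"
proof -
  have "- (\<i> * complex_of_real (a + 2 * pi * of_int m + (b + 2 * pi * of_int m'))) =
     - (\<i> * of_real (a + b)) + \<i> * (of_int (- (m + m')) * (of_real pi * 2))"
    by (simp add: algebra_simps)
  then show ?thesis by (simp only: exp_plus_2pin)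
qed

lemma Dg_periodic: "Dg (a + 2 * pi * of_int m) (b + 2 * pi * of_int m') = Dg a b"
proof -
  have "ev (a + 2 * pi * of_int m) (b + 2 * pi * of_int m') = ev a b"
    by (rule ext) (simp only: ev_def exp_per exp_per3)
  then show ?thesis by (simp only: Dg_def)
qed

definition th :: "real \<Rightarrow> real \<Rightarrow> nat \<Rightarrow> real" where
  "th x y i = (if i = 0 then x / (2*pi) else if i = 1 then y / (2*pi) else 1)"

lemma goodp_distinct:
  assumes g: "goodp x y"
  shows "x \<noteq> y" "x \<noteq> 2*pi" "y \<noteq> 2*pi"
proof -
  show "x \<noteq> y"
  proof
    assume "x = y"
    then have "of_int 1 * x + of_int (-1) * y = 2 * pi * of_int 0" by simp
    from g[unfolded goodp_def, rule_format, OF this] show False by simp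
  qed
  show "x \<noteq> 2*pi"
  proof
    assume "x = 2*pi"
    then have "of_int 1 * x + of_int 0 * y = 2 * pi * of_int 1" by simp
    from g[unfolded goodp_def, rule_format, OF this] show False by simp
  qed
  show "y \<noteq> 2*pi"
  proof
    assume "y = 2*pi"
    then have "of_int 0 * x + of_int 1 * y = 2 * pi * of_int 1" by simp
    from g[unfolded goodp_def, rule_format, OF this] show False by simp
  qed
qed

lemma th_image: "th x y ` {..2} = {x/(2*pi), y/(2*pi), 1}"
proof -
  have "{..2::nat} = {0,1,2}" by auto
  then show ?thesis by (auto simp: th_def)
qed

lemma th_inj: "goodp x y \<Longrightarrow> inj_on (th x y) {..2}"
proof -
  assume g: "goodp x y"
  have "{..2::nat} = {0,1,2}" by auto
  moreover have "x/(2*pi) \<noteq> y/(2*pi)" "x/(2*pi) \<noteq> 1" "y/(2*pi) \<noteq> 1"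
    using goodp_distinct[OF g] by (auto simp: field_simps)
  ultimately show ?thesis by (auto simp: inj_on_def th_def)
qed

lemma th_indep:
  assumes g: "goodp x y"
  shows "module.independent (\<lambda>r x. of_int r * x) (th x y ` {..2})"
proof
  assume dep: "module.dependent (\<lambda>r x. of_int r * x) (th x y ` {..2})"
  have "\<exists>t u. finite t \<and> t \<subseteq> {x/(2*pi), y/(2*pi), 1} \<and> (\<Sum>v\<in>t. of_int (u v) * v) = 0 \<and> (\<exists>v\<in>t. u v \<noteq> (0::int))"
  proof -
    have m: "module (\<lambda>r x. of_int r * (x::real))"
      by (simp add: Modules.module.intro distrib_left distrib_right mult.commute)
    show ?thesis using dep module.dependent_explicit[of "\<lambda>r x. of_int r * x" "th x y ` {..2}"] m
      unfolding th_image by simp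
  qed
  then obtain t u v0 where t: "finite t" "t \<subseteq> {x/(2*pi), y/(2*pi), 1}"
     and s: "(\<Sum>v\<in>t. of_int (u v) * v) = 0" and v0: "v0 \<in> t" "u v0 \<noteq> 0"
    by blast
  define a0 where "a0 = x/(2*pi)"
  define b0 where "b0 = y/(2*pi)"
  define A where "A = {a0, b0, (1::real)}"
  define U where "U v = (if v \<in> t then u v else 0)" for v
  have fA: "finite A" by (simp add: A_def)
  have "(\<Sum>v\<in>A. of_int (U v) * v) = (\<Sum>v\<in>A. if v \<in> t then of_int (u v) * v else 0)"
    by (rule sum.cong) (auto simp: U_def)
  also have "\<dots> = (\<Sum>v\<in>A \<inter> t. of_int (u v) * v)"
    by (rule sum.inter_restrict[OF fA, symmetric])
  also have "A \<inter> t = t" using t by (auto simp: A_def a0_def b0_def)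
  finally have sA: "(\<Sum>v\<in>A. of_int (U v) * v) = 0" using s by simp
  have d: "a0 \<noteq> b0" "a0 \<noteq> 1" "b0 \<noteq> 1"
    using goodp_distinct[OF g] by (auto simp: a0_def b0_def field_simps)
  have e: "of_int (U a0) * a0 + of_int (U b0) * b0 + of_int (U 1) = 0"
    using sA d unfolding A_def by (simp add: add.assoc)
  then have "of_int (U a0) * x + of_int (U b0) * y = 2 * pi * of_int (- U 1)"
    unfolding a0_def b0_def by (simp add: field_simps)
  from g[unfolded goodp_def, rule_format, OF this] have ab: "U a0 = 0" "U b0 = 0" by simp_all
  with e have c: "U 1 = 0" by simp
  have nz: "U v0 \<noteq> 0" using v0 by (simp add: U_def)
  have "v0 \<in> A" using v0 t by (auto simp: A_def a0_def b0_def)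
  then have "v0 = a0 \<or> v0 = b0 \<or> v0 = 1" by (simp add: A_def)
  then show False using ab c nz by (elim disjE) simp_all
qed

lemma sq_bound:
  fixes A B d :: real
  assumes "\<bar>A\<bar> < d/2" "\<bar>B\<bar> < d/2"
  shows "sqrt (A^2 + B^2) < d"
proof -
  have d: "d > 0" using assms by linarith
  have "A^2 < (d/2)^2" using assms(1) by (metis abs_ge_zero power2_abs power_strict_mono zero_less_numeral)
  moreover have "B^2 < (d/2)^2" using assms(2) by (metis abs_ge_zero power2_abs power_strict_mono zero_less_numeral)
  ultimately have "A^2 < d^2/4" "B^2 < d^2/4" by (simp_all add: power_divide)
  then have "A^2 + B^2 < d^2" using zero_le_power2[of A] zero_le_power2[of B] by linarith
  then have "sqrt (A^2 + B^2) < sqrt (d^2)" by (rule real_sqrt_less_mono)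
  then show ?thesis using d by simp
qed

lemma approx_step:
  fixes k :: int and m :: int and x u d :: real
  assumes "\<bar>of_int k * (x / (2*pi)) - of_int m - u / (2*pi)\<bar> < d / (4*pi)"
  shows "\<bar>(of_int k * x - 2*pi* of_int m) - u\<bar> < d/2"
proof -
  have "(of_int k * x - 2*pi* of_int m) - u = 2*pi*(of_int k * (x / (2*pi)) - of_int m - u / (2*pi))"
    by (simp add: field_simps)
  then have "\<bar>(of_int k * x - 2*pi* of_int m) - u\<bar> = 2*pi*\<bar>of_int k * (x / (2*pi)) - of_int m - u / (2*pi)\<bar>"
    by (simp add: abs_mult)
  also have "\<dots> < 2*pi*(d/(4*pi))"
    by (rule mult_strict_left_mono[OF assms]) simp
  also have "\<dots> = d/2" by simp
  finally show ?thesis .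
qed

lemma Tor_closure:
  assumes g: "goodp x y"
  shows "Tor \<subseteq> closure (cyclic_gen (Dg x y))"
proof
  fix h assume "h \<in> Tor"
  then have "h \<in> range Phi" using Tor_range by simp
  then obtain p where hp: "h = Phi p" by auto
  obtain u v where "p = (u, v)" by (cases p)
  with hp have h: "h = Phi (u, v)" by simp
  show "h \<in> closure (cyclic_gen (Dg x y))" unfolding closure_approachable
  proof (intro allI impI)
    fix e :: real assume e: "e > 0"
    from Phi_cont[unfolded continuous_on_iff, rule_format, OF UNIV_I e, of "(u,v)"]
    obtain d where d: "d > 0" and dd: "\<And>p. dist p (u,v) < d \<Longrightarrow> dist (Phi p) (Phi (u,v)) < e"
      by blast
    define al where "al i = (if i = 0 then u / (2*pi) else v / (2*pi))" for i :: nat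
    have t2: "th x y 2 = 1" by (simp add: th_def)
    have dpos: "d / (4*pi) > 0" using d by simp
    obtain k m where km: "\<And>i. i < 2 \<Longrightarrow> \<bar>of_int k * th x y i - of_int (m i) - al i\<bar> < d / (4*pi)"
      using Kronecker_thm_2[where \<alpha> = al, OF th_indep[OF g] th_inj[OF g] t2 dpos] by blast
    define p1 where "p1 = of_int k * x - 2*pi* of_int (m 0)"
    define p2 where "p2 = of_int k * y - 2*pi* of_int (m 1)"
    have b1: "\<bar>p1 - u\<bar> < d/2" unfolding p1_def
      using km[of 0] by (intro approx_step) (simp add: th_def al_def)
    have b2: "\<bar>p2 - v\<bar> < d/2" unfolding p2_def
      using km[of 1] by (intro approx_step) (simp add: th_def al_def)
    have "dist (p1, p2) (u, v) = sqrt ((p1 - u)^2 + (p2 - v)^2)"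
      by (simp add: dist_Pair_Pair dist_real_def)
    also have "\<dots> < d" using sq_bound[OF b1 b2] .
    finally have "dist (Phi (p1, p2)) h < e" using dd h by blast
    moreover have "Phi (p1, p2) = Dg (of_int k * x) (of_int k * y)"
    proof -
      have "Dg (p1 + 2 * pi * of_int (m 0)) (p2 + 2 * pi * of_int (m 1)) = Dg p1 p2"
        by (rule Dg_periodic)
      then show ?thesis by (simp add: Phi_def p1_def p2_def)
    qed
    ultimately show "\<exists>z\<in>cyclic_gen (Dg x y). dist z h < e" using int_pow_in by metis
  qed
qed

lemma generic_Dg:
  assumes g: "goodp x y"
  shows "generic (Dg x y)"
  unfolding generic_def regular_def centralizer_Dg[OF g]
  using Dg_SU3 Tor_maximal[OF g] Tor_closure[OF g] by blast

definition linef :: "int \<Rightarrow> int \<Rightarrow> int \<Rightarrow> real \<Rightarrow> complex" where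
  "linef a b c t = ftr (2*pi*c*a/(a^2+b^2) - t * b) (2*pi*c*b/(a^2+b^2) + t * a)"

lemma bad_on_line:
  assumes "\<not> goodp x y"
  shows "\<exists>a b c t. ftr x y = linef a b c t"
proof -
  obtain a b c :: int where e: "of_int a * x + of_int b * y = 2 * pi * of_int c" and nz: "a \<noteq> 0 \<or> b \<noteq> 0"
    using assms unfolding goodp_def by blast
  have pos: "(real_of_int a)^2 + (real_of_int b)^2 > 0" using nz
    by (metis add_nonneg_pos add_pos_nonneg of_int_eq_0_iff zero_le_power2 zero_less_power2)
  define t where "t = (- of_int b * x + of_int a * y) / ((of_int a)^2 + (of_int b)^2)"
  define D :: real where "D = (of_int a)^2 + (of_int b)^2"
  define N :: real where "N = - of_int b * x + of_int a * y"
  have Dp: "D \<noteq> 0" using pos unfolding D_def by linarith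
  have "x = 2*pi*c*a/(a^2+b^2) - t * b"
  proof -
    have h: "2*pi*c*a - N * b = x * D"
      using e[symmetric] unfolding N_def D_def by (simp add: algebra_simps power2_eq_square)
    have tb: "t * b = N * b / D" unfolding t_def N_def D_def by simp
    have "2*pi*c*a/(a^2+b^2) - t * b = (2*pi*c*a - N * b) / D"
      unfolding tb by (simp add: diff_divide_distrib D_def)
    also have "\<dots> = x" unfolding h using Dp by simp
    finally show ?thesis by simp
  qed
  moreover have "y = 2*pi*c*b/(a^2+b^2) + t * a"
  proof -
    have h: "2*pi*c*b + N * a = y * D"
      using e[symmetric] unfolding N_def D_def by (simp add: algebra_simps power2_eq_square)
    have ta: "t * a = N * a / D" unfolding t_def N_def D_def by simp
    have "2*pi*c*b/(a^2+b^2) + t * a = (2*pi*c*b + N * a) / D"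
      unfolding ta by (simp add: add_divide_distrib D_def)
    also have "\<dots> = y" unfolding h using Dp by simp
    finally show ?thesis by simp
  qed
  ultimately have "ftr x y = linef a b c t" unfolding linef_def by simp
  then show ?thesis by blast
qed

lemma linef_diff: "linef a b c differentiable_on UNIV"
proof -
  define p :: real where "p = 2*pi*c*a/(a^2+b^2)"
  define q :: real where "q = 2*pi*c*b/(a^2+b^2)"
  define G where "G z = exp (\<i> * (of_real p - z * of_int b)) + exp (\<i> * (of_real q + z * of_int a))
      + exp (- (\<i> * ((of_real p - z * of_int b) + (of_real q + z * of_int a))))" for z :: complex
  have eq: "linef a b c = (\<lambda>t. G (of_real t))"
    by (rule ext) (simp add: linef_def G_def ftr_def p_def q_def)
  have hol: "G holomorphic_on UNIV" unfolding G_def by (intro holomorphic_intros)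
  have d1: "G differentiable at (complex_of_real t)" for t :: real
    by (rule field_differentiable_imp_differentiable[OF holomorphic_on_imp_differentiable_at[OF hol]]) auto
  have d2: "complex_of_real differentiable at t" for t :: real
    by (rule bounded_linear_imp_differentiable[OF bounded_linear_of_real])
  have "(\<lambda>t. G (of_real t)) differentiable (at t)" for t :: real
    using differentiable_compose[OF d1 d2] .
  then show ?thesis unfolding eq by (simp add: differentiable_at_imp_differentiable_on)
qed

lemma bad_null: "negligible (\<Union>abc\<in>UNIV. range (linef (fst abc) (fst (snd abc)) (snd (snd abc))))"
  apply (rule negligible_countable_Union)
   apply simp
  apply clarify
  apply (rule negligible_differentiable_image_lowdim[OF _ linef_diff])
  apply simp
  done

theorem proposition6p3:
  shows "trace ` SU3 - trace ` {a \<in> SU3. generic a} \<in> null_sets lebesgue"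
proof -
  have "trace ` SU3 - trace ` {a \<in> SU3. generic a} \<subseteq>
        (\<Union>abc\<in>UNIV. range (linef (fst abc) (fst (snd abc)) (snd (snd abc))))"
  proof
    fix z assume z: "z \<in> trace ` SU3 - trace ` {a \<in> SU3. generic a}"
    then obtain A where A: "A \<in> SU3" "z = trace A" by auto
    obtain x y where xy: "trace A = ftr x y" using trace_SU3[OF A(1)] by blast
    have "\<not> goodp x y"
    proof
      assume g: "goodp x y"
      have "z = trace (Dg x y)" using A xy trace_Dg by simp
      moreover have "Dg x y \<in> {a \<in> SU3. generic a}" using generic_Dg[OF g] Dg_SU3 by simp
      ultimately show False using z by blast
    qed
    then obtain a b c t where "ftr x y = linef a b c t" using bad_on_line by blast
    then show "z \<in> (\<Union>abc\<in>UNIV. range (linef (fst abc) (fst (snd abc)) (snd (snd abc))))"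
      using A xy by (intro UN_I[of "(a,b,c)"]) auto
  qed
  then have "negligible (trace ` SU3 - trace ` {a \<in> SU3. generic a})"
    using bad_null negligible_subset by blast
  then show ?thesis by (simp add: negligible_iff_null_sets)
qed

end
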